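(* Let $\mathcal{C}\subseteq\mathbb{F}_q^n$ be a linear code of dimension $k\ge1$ and minimum distance $d\ge2$, and $J=n-k-d+2$. Let $\mathbf{h}_1,\dots,\mathbf{h}_m\in\mathcal{C}^\perp$ be linearly independent with $m>J$, and let $\mathcal{S}_j=\operatorname{supp}(\mathbf{h}_j)$. Assume $\mathcal{S}_1,\dots,\mathcal{S}_J$ are pairwise disjoint, let $\mathcal{U}=\mathcal{S}_1\cup\cdots\cup\mathcal{S}_J$ and $\theta=n-|\mathcal{U}|$, and assume $\theta\in[1,d-2]$. For $i\in[J+1,m]$ let $\theta_i=|\mathcal{S}_i\setminus\mathcal{U}|$ and assume $\theta_i\ge1$. Then for every $i\in[J+1,m]$ and every $l\in[1,J]$ with $|\mathcal{S}_l|>\theta_i$, $$|\mathcal{S}_i\cap\mathcal{S}_l|\ \ge\ |\mathcal{S}_l|-\theta_i+\theta-d+2 .$$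
   Context: $\operatorname{supp}(\mathbf{h})=\{l\in[1,n]:h_l\neq0\}$; $\mathcal{C}^\perp$ is the dual code; $[a,b]=\{a,\dots,b\}$. *)

theory Defs
  imports Complex_Main "HOL-Library.Function_Algebras"
begin

text \<open>Vectors of F_q^n are functions from a finite coordinate type 'n (with n = CARD('n))
  into a finite field 'a. Scalar multiplication is componentwise.\<close>

definition fscale :: "'a::field \<Rightarrow> ('n \<Rightarrow> 'a) \<Rightarrow> ('n \<Rightarrow> 'a)" where
  "fscale c v = (\<lambda>i. c * v i)"

lemma vector_space_fscale: "vector_space (fscale :: 'a::field \<Rightarrow> ('n \<Rightarrow> 'a) \<Rightarrow> _)"
  by unfold_locales (auto simp: fscale_def fun_eq_iff algebra_simps)

definition linear_code :: "('n \<Rightarrow> 'a::field) set \<Rightarrow> bool" where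
  "linear_code C = module.subspace fscale C"

definition code_dim :: "('n \<Rightarrow> 'a::field) set \<Rightarrow> nat" where
  "code_dim C = vector_space.dim fscale C"

definition supp :: "('n \<Rightarrow> 'a::zero) \<Rightarrow> 'n set" where
  "supp v = {l. v l \<noteq> 0}"

definition hweight :: "('n::finite \<Rightarrow> 'a::zero) \<Rightarrow> nat" where
  "hweight v = card (supp v)"

text \<open>Minimum distance of a linear code = minimum weight of a nonzero codeword.\<close>
definition min_dist :: "('n::finite \<Rightarrow> 'a::field) set \<Rightarrow> nat" where
  "min_dist C = Min (hweight ` (C - {0}))"

definition dual_code :: "('n::finite \<Rightarrow> 'a::field) set \<Rightarrow> ('n \<Rightarrow> 'a) set" where
  "dual_code C = {h. \<forall>c\<in>C. (\<Sum>i\<in>UNIV. h i * c i) = 0}"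

definition lin_indep :: "('n \<Rightarrow> 'a::field) set \<Rightarrow> bool" where
  "lin_indep S = module.independent fscale S"

end

theory Submission imports Defs begin

interpretation fs: vector_space "fscale :: 'a::field \<Rightarrow> ('n \<Rightarrow> 'a) \<Rightarrow> _"
  by (rule vector_space_fscale)

lemma sum_fun_apply: "(\<Sum>x\<in>A. f x) i = (\<Sum>x\<in>A. f x i)"
  by (induction A rule: infinite_finite_induct) auto

definition ev :: "'n \<Rightarrow> ('n \<Rightarrow> 'a::field)" where "ev t = (\<lambda>j. if j = t then 1 else 0)"

lemma vec_decomp: "(v::'n::finite \<Rightarrow> 'a::field) = (\<Sum>t\<in>UNIV. fscale (v t) (ev t))"
  by (rule ext) (simp add: sum_fun_apply fscale_def ev_def if_distrib cong: if_cong)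

lemma span_ev: "(v::'n::finite \<Rightarrow> 'a::field) \<in> fs.span (range ev)"
  by (subst vec_decomp) (intro fs.span_sum fs.span_scale fs.span_base, auto)

lemma indep_card_le:
  assumes "fs.independent (B :: ('n::finite \<Rightarrow> 'a::field) set)"
  shows "finite B \<and> card B \<le> card (UNIV :: 'n set)"
proof -
  have "finite B \<and> card B \<le> card (range (ev :: 'n \<Rightarrow> 'n \<Rightarrow> 'a))"
    by (rule fs.independent_span_bound) (use assms span_ev in auto)
  moreover have "card (range (ev :: 'n \<Rightarrow> 'n \<Rightarrow> 'a)) \<le> card (UNIV :: 'n set)" by (rule card_image_le) simp
  ultimately show ?thesis by linarith
qed

lemma ev_ip: "(\<Sum>j\<in>UNIV. g j * ev i j) = (g (i::'n::finite) :: 'a::field)"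
proof -
  have "(\<Sum>j\<in>UNIV. g j * ev i j) = (\<Sum>j\<in>UNIV. if j = i then g j else 0)"
    by (rule sum.cong) (auto simp: ev_def)
  then show ?thesis by simp
qed

lemma KL:
  fixes K G :: "('n::finite \<Rightarrow> 'a::field) set"
  assumes K: "fs.independent K" and G: "fs.independent G"
    and orth: "\<forall>g\<in>G. \<forall>x\<in>K. (\<Sum>i\<in>UNIV. g i * x i) = 0"
  shows "card K + card G \<le> card (UNIV::'n set)"
proof -
  define L :: "('n \<Rightarrow> 'a) \<Rightarrow> (('n \<Rightarrow> 'a) \<Rightarrow> 'a)" where
    "L x = (\<lambda>g. if g \<in> G then (\<Sum>i\<in>UNIV. g i * x i) else 0)" for x
  have lin: "Vector_Spaces.linear fscale fscale L"
    unfolding Vector_Spaces.linear_iff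
  proof (intro conjI allI vector_space_fscale)
    fix x y show "L (x + y) = L x + L y"
      by (rule ext) (simp add: L_def distrib_left sum.distrib)
  next
    fix c x show "L (fscale c x) = fscale c (L x)"
      by (rule ext) (simp add: L_def fscale_def sum_distrib_left algebra_simps)
  qed
  obtain B where KB: "K \<subseteq> B" and "B \<subseteq> UNIV" and B: "fs.independent B" and spB: "UNIV \<subseteq> fs.span B"
    by (rule fs.maximal_independent_subset_extend[OF subset_UNIV K])
  have finB: "finite B" and cB: "card B \<le> card (UNIV::'n set)"
    using indep_card_le[OF B] by auto
  define M where "M = B - K"
  have cM: "card M = card B - card K"
    unfolding M_def using KB finB by (simp add: card_Diff_subset finite_subset)
  have L0: "L b = 0" if "b \<in> K" for b
    using orth that by (auto simp: L_def fun_eq_iff)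
  have mh: "module_hom fscale fscale L" using lin by (simp add: linear_iff_module_hom)
  have inspan: "L x \<in> fs.span (L ` M)" for x
  proof -
    have "L x \<in> L ` fs.span B" using spB by blast
    also have "\<dots> = fs.span (L ` B)" by (rule module_hom.span_image[OF mh, symmetric])
    also have "\<dots> \<subseteq> fs.span (insert 0 (L ` M))"
      by (rule fs.span_mono) (auto simp: M_def L0)
    also have "\<dots> = fs.span (L ` M)" by simp
    finally show ?thesis .
  qed
  define Y where "Y = L ` M"
  have finY: "finite Y" unfolding Y_def M_def using finB by simp
  have "\<forall>i. \<exists>u. L (ev i) = (\<Sum>v\<in>Y. fscale (u v) v)"
  proof
    fix i
    have "L (ev i) \<in> range (\<lambda>u. \<Sum>v\<in>Y. fscale (u v) v)"
      using inspan[of "ev i"] fs.span_finite[OF finY] unfolding Y_def by simp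
    then show "\<exists>u. L (ev i) = (\<Sum>v\<in>Y. fscale (u v) v)" by (simp add: image_iff)
  qed
  then obtain a where a: "\<And>i. L (ev i) = (\<Sum>v\<in>Y. fscale (a i v) v)" by (rule choice_iff[THEN iffD1, elim_format]) blast
  define w where "w v = (\<lambda>i. a i v)" for v
  have "G \<subseteq> fs.span (w ` Y)"
  proof
    fix g assume gG: "g \<in> G"
    have "g = (\<Sum>v\<in>Y. fscale (v g) (w v))"
    proof (rule ext)
      fix i
      have "g i = L (ev i) g" using gG by (simp add: L_def ev_ip)
      also have "\<dots> = (\<Sum>v\<in>Y. a i v * v g)" by (simp add: a sum_fun_apply fscale_def)
      finally show "g i = (\<Sum>v\<in>Y. fscale (v g) (w v)) i"
        by (simp add: sum_fun_apply fscale_def w_def mult.commute)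
    qed
    also have "\<dots> \<in> fs.span (w ` Y)"
      by (intro fs.span_sum fs.span_scale fs.span_base) auto
    finally show "g \<in> fs.span (w ` Y)" .
  qed
  then have "card G \<le> card (w ` Y)"
    using fs.independent_span_bound[OF _ G] finY by auto
  also have "\<dots> \<le> card Y" using finY by (rule card_image_le)
  also have "\<dots> \<le> card M" unfolding Y_def using finB M_def by (simp add: card_image_le)
  finally show ?thesis using cM cB KB finB card_mono[OF finB KB] by linarith
qed

theorem lemma5:
  fixes C :: "('n::finite \<Rightarrow> 'a::{field,finite}) set"
    and k d J m :: nat
    and h :: "nat \<Rightarrow> ('n \<Rightarrow> 'a)"
  assumes lin: "linear_code C"
    and kdim: "code_dim C = k" and k1: "k \<ge> 1"
    and dd: "min_dist C = d" and d2: "d \<ge> 2"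
    and Jdef: "int J = int (card (UNIV :: 'n set)) - int k - int d + 2"
    and hdual: "\<forall>j\<in>{1..m}. h j \<in> dual_code C"
    and hinj: "inj_on h {1..m}"
    and hind: "lin_indep (h ` {1..m})"
    and mJ: "m > J"
    and disj: "\<forall>j\<in>{1..J}. \<forall>j'\<in>{1..J}. j \<noteq> j' \<longrightarrow> supp (h j) \<inter> supp (h j') = {}"
    and theta: "1 \<le> card (UNIV :: 'n set) - card (\<Union>j\<in>{1..J}. supp (h j))"
               "card (UNIV :: 'n set) - card (\<Union>j\<in>{1..J}. supp (h j)) \<le> d - 2"
    and thetai: "\<forall>i\<in>{J+1..m}. card (supp (h i) - (\<Union>j\<in>{1..J}. supp (h j))) \<ge> 1"
  shows "\<forall>i\<in>{J+1..m}. \<forall>l\<in>{1..J}.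
           card (supp (h l)) > card (supp (h i) - (\<Union>j\<in>{1..J}. supp (h j))) \<longrightarrow>
           int (card (supp (h i) \<inter> supp (h l)))
             \<ge> int (card (supp (h l))) - int (card (supp (h i) - (\<Union>j\<in>{1..J}. supp (h j))))
                + int (card (UNIV :: 'n set) - card (\<Union>j\<in>{1..J}. supp (h j))) - int d + 2"
proof (intro ballI impI)
  fix i l assume iR: "i \<in> {J+1..m}" and lR: "l \<in> {1..J}"
  define S where "S x = supp (h x)" for x
  define U where "U = (\<Union>j\<in>{1..J}. S j)"
  define n where "n = card (UNIV :: 'n set)"
  define th where "th = n - card U"
  define thi where "thi = card (S i - U)"
  assume gt: "card (supp (h l)) > card (supp (h i) - (\<Union>j\<in>{1..J}. supp (h j)))"
  show "int (card (supp (h i) \<inter> supp (h l)))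
             \<ge> int (card (supp (h l))) - int (card (supp (h i) - (\<Union>j\<in>{1..J}. supp (h j))))
                + int (card (UNIV :: 'n set) - card (\<Union>j\<in>{1..J}. supp (h j))) - int d + 2"
  proof (rule ccontr)
    assume neg0: "\<not> ?thesis"
    have neg: "int (card (S i \<inter> S l)) < int (card (S l)) - int thi + int th - int d + 2"
      using neg0 unfolding S_def thi_def th_def n_def U_def by linarith
    have cU: "card U \<le> n" unfolding n_def by (rule card_mono) auto
    have SlU: "S l \<subseteq> U" using lR unfolding U_def by blast
    define T where "T = (S l - S i) \<union> (- U - S i)"
    have c1: "card (S l - S i) = card (S l) - card (S l \<inter> S i)"
      by (rule card_Diff_subset_Int) simp
    have c1': "card (S l \<inter> S i) \<le> card (S l)" by (rule card_mono) auto
    have "- U - S i = - U - (S i - U)" by blast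
    moreover have "card (- U - (S i - U)) = card (- U) - card (S i - U)"
      by (rule card_Diff_subset) auto
    ultimately have c2: "card (- U - S i) = card (- U) - card (S i - U)" by simp
    have c2': "card (S i - U) \<le> card (- U)" by (rule card_mono) auto
    have cCU: "card (- U) = n - card U" unfolding n_def using card_Diff_subset[of U UNIV] by (simp add: Compl_eq_Diff_UNIV)
    have "card T = card (S l - S i) + card (- U - S i)"
      unfolding T_def by (rule card_Un_disjoint) (use SlU in auto)
    then have cT: "int (card T) = int (card (S l)) - int (card (S i \<inter> S l)) + int th - int thi"
      using c1 c1' c2 c2' cCU cU unfolding th_def thi_def by (simp add: Int_commute of_nat_diff)
    have "d - 1 \<le> card T" using cT neg d2 by linarith
    then obtain T' where T'T: "T' \<subseteq> T" and cT': "card T' = d - 1" and finT': "finite T'"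
      by (rule obtain_subset_with_card_n)
    have finC: "finite C" by simp
    have zero: "c = 0" if "c \<in> C" "supp c \<subseteq> T'" for c
    proof (rule ccontr)
      assume "c \<noteq> 0"
      then have "d \<le> hweight c" using that dd unfolding min_dist_def
        by (metis DiffI Min_le empty_iff finite_Diff finite_imageI finC image_eqI insert_iff)
      also have "\<dots> \<le> card T'" unfolding hweight_def using that finT' by (simp add: card_mono)
      finally show False using cT' d2 by linarith
    qed
    have subC: "fs.subspace C" using lin unfolding linear_code_def .
    obtain BC where BCC: "BC \<subseteq> C" and BCi: "fs.independent BC" and BCs: "C \<subseteq> fs.span BC"
      and cBC: "card BC = fs.dim C"
      by (rule fs.basis_exists)
    have finBC: "finite BC" using indep_card_le[OF BCi] by simp
    have ckBC: "card BC = k" using cBC kdim unfolding code_dim_def by simp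
    define E where "E = (ev :: 'n \<Rightarrow> 'n \<Rightarrow> 'a) ` T'"
    have evinj: "inj (ev :: 'n \<Rightarrow> 'n \<Rightarrow> 'a)"
    proof (rule injI)
      fix x y :: 'n assume "(ev x :: 'n \<Rightarrow> 'a) = ev y"
      then have "(ev x :: 'n \<Rightarrow> 'a) x = ev y x" by simp
      then show "x = y" by (simp add: ev_def split: if_splits)
    qed
    have cE: "card E = d - 1" unfolding E_def using cT' card_image[OF inj_on_subset[OF evinj subset_UNIV]] by simp
    have supp_ev: "supp (ev t :: 'n \<Rightarrow> 'a) = {t}" for t by (auto simp: supp_def ev_def)
    have BCE: "BC \<inter> E = {}"
    proof (rule ccontr)
      assume "BC \<inter> E \<noteq> {}"
      then obtain t where t: "t \<in> T'" "ev t \<in> C" using BCC unfolding E_def by blast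
      have "ev t = (0 :: 'n \<Rightarrow> 'a)" by (rule zero) (use t supp_ev in auto)
      then have "(ev t :: 'n \<Rightarrow> 'a) t = 0" by simp
      then show False by (simp add: ev_def)
    qed
    define K where "K = BC \<union> E"
    have finE: "finite E" unfolding E_def using finT' by simp
    have cK: "card K = k + (d - 1)" unfolding K_def using card_Un_disjoint[OF finBC finE BCE] ckBC cE by simp
    have Ki: "fs.independent K"
    proof (rule fs.independent_if_scalars_zero)
      show "finite K" unfolding K_def using finBC finE by simp
    next
      fix f x assume sum0: "(\<Sum>x\<in>K. fscale (f x) x) = 0" and xK: "x \<in> K"
      define c where "c = (\<Sum>x\<in>BC. fscale (f x) x)"
      define e where "e = (\<Sum>x\<in>E. fscale (f x) x)"
      have ce: "c + e = 0" using sum0 unfolding K_def c_def e_def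
        by (simp add: sum.union_disjoint[OF finBC finE BCE])
      have cC: "c \<in> C" unfolding c_def
        using fs.span_minimal[OF BCC subC] by (intro subsetD[OF _ fs.span_sum]) (auto intro: fs.span_scale fs.span_base)
      have esupp: "e j = 0" if "j \<notin> T'" for j
        unfolding e_def sum_fun_apply using that by (intro sum.neutral) (auto simp: E_def fscale_def ev_def)
      have "supp c \<subseteq> T'"
      proof
        fix j assume "j \<in> supp c"
        then have "c j \<noteq> 0" by (simp add: supp_def)
        moreover have "(c + e) j = 0" using ce by simp
        then have "c j = - e j" by (simp add: eq_neg_iff_add_eq_0)
        ultimately show "j \<in> T'" using esupp by (cases "j \<in> T'") auto
      qed
      then have c0: "c = 0" using zero cC by blast
      have fBC: "\<forall>v\<in>BC. f v = 0"
        using BCi c0 unfolding c_def fs.independent_explicit_finite_subsets using finBC by blast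
      have e0: "e = 0" using ce c0 by simp
      show "f x = 0"
      proof (cases "x \<in> BC")
        case True then show ?thesis using fBC by blast
      next
        case False
        then obtain t where t: "t \<in> T'" "x = ev t" using xK unfolding K_def E_def by blast
        have "e t = (\<Sum>y\<in>E. if y = x then f y else 0)" unfolding e_def sum_fun_apply
          using t by (intro sum.cong) (auto simp: E_def fscale_def ev_def split: if_splits)
        also have "\<dots> = f x" using t finE by (simp add: E_def)
        finally show ?thesis using e0 by simp
      qed
    qed
    define I where "I = ({1..J} - {l}) \<union> {i}"
    have I1m: "I \<subseteq> {1..m}" unfolding I_def using iR lR mJ by auto
    have cI: "card I = J" unfolding I_def using iR lR by (auto simp: card_insert_if)
    define G where "G = h ` I"
    have cG: "card G = J" unfolding G_def using card_image[OF inj_on_subset[OF hinj I1m]] cI by simp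
    have Gi: "fs.independent G" unfolding G_def
      using hind I1m unfolding lin_indep_def by (meson fs.independent_mono image_mono)
    have orth: "\<forall>g\<in>G. \<forall>x\<in>K. (\<Sum>j\<in>UNIV. g j * x j) = 0"
    proof (intro ballI)
      fix g x assume gG: "g \<in> G" and xK: "x \<in> K"
      then obtain j where jI: "j \<in> I" and g: "g = h j" unfolding G_def by blast
      show "(\<Sum>j\<in>UNIV. g j * x j) = 0"
      proof (cases "x \<in> BC")
        case True
        then show ?thesis using hdual I1m jI BCC unfolding g dual_code_def by blast
      next
        case False
        then obtain t where t: "t \<in> T'" "x = ev t" using xK unfolding K_def E_def by blast
        have tT: "t \<in> T" using t T'T by blast
        have "t \<notin> S j"
        proof (cases "j = i")
          case True then show ?thesis using tT unfolding T_def by blast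
        next
          case False
          then have jJ: "j \<in> {1..J}" "j \<noteq> l" using jI unfolding I_def by auto
          show ?thesis
          proof
            assume tj: "t \<in> S j"
            have "t \<in> S l \<or> t \<notin> U" using tT unfolding T_def by blast
            then show False
            proof
              assume "t \<in> S l"
              then show False using disj jJ lR tj unfolding S_def by blast
            next
              assume "t \<notin> U" then show False using tj jJ unfolding U_def by blast
            qed
          qed
        qed
        then have "g t = 0" unfolding g S_def supp_def by simp
        then show ?thesis unfolding t(2) by (simp add: ev_ip)
      qed
    qed
    have "card K + card G \<le> n" unfolding n_def by (rule KL[OF Ki Gi orth])
    then show False using cK cG Jdef d2 k1 unfolding n_def by linarith
  qed
qed

end
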